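(* Let $I\subseteq\mathbb{R}$ be an open interval and let $f$ be a non-constant real analytic function on $I$ with $f(\mathbb{Q}\cap I)\subseteq\mathbb{Q}$. Assume that there exists a function $\psi:\mathbb{R}_{>0}\to\mathbb{R}_{>0}$ with the following properties: (i) $\psi(m)=o(m)$ as $m\to\infty$; (ii) for every $\zeta\in\mathscr{L}\cap I$ and every integer $m\geq 1$ one can find coprime integers $p_m,q_m\geq 2$ such that $\left|\zeta-\frac{p_m}{q_m}\right|\leq q_m^{-m}$ and, writing $f(p_m/q_m)=p_m'/q_m'$ in lowest terms, one has $q_m'\leq q_m^{\psi(m)}$. Then $f(\mathscr{L}\cap I)\subseteq\mathscr{L}$.
   Context: $\mathscr{L}$ denotes the set of Liouville numbers: real irrational numbers $\zeta$ such that for every $\eta>0$ the inequality $|\zeta-y/x|\leq x^{-\eta}$ has infinitely many rational solutions $y/x$ with $x\geq 1$ (equivalently, real numbers with infinite irrationality exponent). For a set $A$, $f(A)=\{f(x):x\in A\}$. *)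

theory Defs
  imports "HOL-Analysis.Analysis" "HOL-Library.Landau_Symbols"
begin

definition Liouville :: "real set" where
  "Liouville = {\<zeta>. \<zeta> \<notin> \<rat> \<and>
     (\<forall>\<eta>::real. \<eta> > 0 \<longrightarrow>
        infinite {(y::int, x::int). x \<ge> 1 \<and> \<bar>\<zeta> - real_of_int y / real_of_int x\<bar> \<le> real_of_int x powr (-\<eta>)})}"

definition real_analytic_on :: "(real \<Rightarrow> real) \<Rightarrow> real set \<Rightarrow> bool" where
  "real_analytic_on f I \<longleftrightarrow>
     (\<forall>x0\<in>I. \<exists>r>0. \<exists>a::nat \<Rightarrow> real.
        \<forall>x. \<bar>x - x0\<bar> < r \<longrightarrow> (\<lambda>n. a n * (x - x0) ^ n) sums f x)"

end

theory Submission
  imports Defs "HOL-Complex_Analysis.Cauchy_Integral_Formula"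
begin


lemma isCont_bound1: "isCont (G::real\<Rightarrow>real) 0 \<Longrightarrow> \<exists>d>0. \<forall>h. \<bar>h\<bar> < d \<longrightarrow> \<bar>G h - G 0\<bar> < 1"
proof -
  assume "isCont G 0"
  hence "G \<midarrow>0\<rightarrow> G 0" by (simp add: isCont_def)
  from LIM_D[OF this, of 1] obtain s where s: "s > 0" "\<And>x. x \<noteq> 0 \<and> norm (x - 0) < s \<Longrightarrow> norm (G x - G 0) < 1"
    by auto
  show ?thesis
  proof (intro exI conjI allI impI)
    show "s > 0" by (rule s)
    fix h :: real assume h: "\<bar>h\<bar> < s"
    show "\<bar>G h - G 0\<bar> < 1"
    proof (cases "h = 0")
      case False thus ?thesis using s(2)[of h] h by simp
    qed simp
  qed
qed

lemma analytic_lip: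
  assumes "real_analytic_on f I" "x0 \<in> I"
  shows "\<exists>d>0. \<exists>C>0. \<forall>y. \<bar>y - x0\<bar> < d \<longrightarrow> \<bar>f y - f x0\<bar> \<le> C * \<bar>y - x0\<bar>"
proof -
  obtain r a where r: "r > 0" and sm: "\<And>x. \<bar>x - x0\<bar> < r \<Longrightarrow> (\<lambda>n. a n * (x - x0) ^ n) sums f x"
    using assms unfolding real_analytic_on_def by blast
  define K where "K = r/2"
  have K: "K > 0" "K < r" using r by (auto simp: K_def)
  have "(\<lambda>n. a n * K ^ n) sums f (x0 + K)" using sm[of "x0+K"] K by simp
  hence sK: "summable (\<lambda>n. a n * K ^ n)" by (simp add: sums_summable)
  have "summable (\<lambda>n. a (Suc n) * K ^ (Suc n))"
    using summable_ignore_initial_segment[OF sK, of 1] by simp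
  hence "summable (\<lambda>n. a (Suc n) * K ^ (Suc n) / K)" by (rule summable_divide)
  hence sK1: "summable (\<lambda>n. a (Suc n) * K ^ n)" using K by (simp add: field_simps)
  define G where "G = (\<lambda>h. \<Sum>n. a (Suc n) * h ^ n)"
  have cG: "isCont G 0" unfolding G_def by (rule isCont_powser[OF sK1]) (use K in simp)
  have f0: "f x0 = a 0" using sm[of x0] r by (simp add: sums_iff)
  have fy: "f y = f x0 + G (y - x0) * (y - x0)" if "\<bar>y - x0\<bar> < r" for y
  proof -
    have "(\<lambda>n. a n * (y - x0) ^ n) sums f y" using sm that .
    hence e: "f y = (\<Sum>n. a n * (y - x0) ^ n)" and s: "summable (\<lambda>n. a n * (y - x0) ^ n)"
      by (auto simp: sums_iff)
    have "f y = a 0 + (\<Sum>n. a (Suc n) * (y - x0) ^ n) * (y - x0)"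
      using e powser_split_head(1)[OF s] by (rule trans)
    thus ?thesis unfolding G_def f0 by simp
  qed
  from cG have "\<exists>d>0. \<forall>h. \<bar>h\<bar> < d \<longrightarrow> \<bar>G h - G 0\<bar> < 1"
    by (rule isCont_bound1)
  then obtain d where d: "d > 0" "\<And>h. \<bar>h\<bar> < d \<Longrightarrow> \<bar>G h - G 0\<bar> < 1" by blast
  show ?thesis
  proof (intro exI conjI allI impI)
    show "min d r > 0" using d r by simp
    show "\<bar>G 0\<bar> + 1 > 0" by simp
    fix y assume y: "\<bar>y - x0\<bar> < min d r"
    have "\<bar>f y - f x0\<bar> = \<bar>G (y - x0)\<bar> * \<bar>y - x0\<bar>" using fy[of y] y by (simp add: abs_mult)
    also have "\<dots> \<le> (\<bar>G 0\<bar> + 1) * \<bar>y - x0\<bar>"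
      using d(2)[of "y - x0"] y by (intro mult_right_mono) auto
    finally show "\<bar>f y - f x0\<bar> \<le> (\<bar>G 0\<bar> + 1) * \<bar>y - x0\<bar>" .
  qed
qed



lemma analytic_loc_const:
  assumes an: "real_analytic_on f I" and x0: "x0 \<in> I"
    and acc: "\<forall>e>0. \<exists>z. z \<noteq> x0 \<and> \<bar>z - x0\<bar> < e \<and> f z = c"
  shows "\<exists>e>0. \<forall>y. \<bar>y - x0\<bar> < e \<longrightarrow> f y = c"
proof -
  have fx0: "f x0 = c"
  proof (rule ccontr)
    assume ne: "f x0 \<noteq> c"
    obtain d C where d: "d > 0" "C > 0" and L: "\<And>y. \<bar>y - x0\<bar> < d \<Longrightarrow> \<bar>f y - f x0\<bar> \<le> C * \<bar>y - x0\<bar>"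
      using analytic_lip[OF an x0] by blast
    define e where "e = min d (\<bar>f x0 - c\<bar> / C)"
    have e: "e > 0" using d ne by (auto simp: e_def)
    obtain z where z: "\<bar>z - x0\<bar> < e" "f z = c" using acc e by blast
    have "\<bar>f z - f x0\<bar> \<le> C * \<bar>z - x0\<bar>" using L[of z] z(1) by (simp add: e_def)
    also have "\<dots> < C * (\<bar>f x0 - c\<bar> / C)" using z d by (intro mult_strict_left_mono) (auto simp: e_def)
    also have "\<dots> = \<bar>f x0 - c\<bar>" using d by simp
    finally show False using z by simp
  qed
  obtain r a where r: "r > 0" and sm: "\<And>x. \<bar>x - x0\<bar> < r \<Longrightarrow> (\<lambda>n. a n * (x - x0) ^ n) sums f x"
    using an x0 unfolding real_analytic_on_def by blast
  define b where "b = (\<lambda>n. if n = 0 then a 0 - c else a n)"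
  have smb: "(\<lambda>n. b n * (x - x0) ^ n) sums (f x - c)" if "norm (x - x0) < r" for x
  proof -
    have "(\<lambda>n. a n * (x - x0) ^ n - (if n = 0 then c else 0)) sums (f x - c)"
      using sums_diff[OF sm[of x] sums_single[of 0 "\<lambda>_. c"]] that by simp
    moreover have "(\<lambda>n. a n * (x - x0) ^ n - (if n = 0 then c else 0)) = (\<lambda>n. b n * (x - x0) ^ n)"
      by (auto simp: b_def algebra_simps)
    ultimately show ?thesis by simp
  qed
  have az: "a m = 0" if m: "m > 0" for m
  proof (rule ccontr)
    assume "a m \<noteq> 0"
    hence "b m \<noteq> 0" using m by (simp add: b_def)
    then obtain s where s: "s > 0" "\<And>z. z \<in> cball x0 s - {x0} \<Longrightarrow> f z - c \<noteq> 0"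
      using powser_0_nonzero[where r=r and a=b and \<xi>=x0 and f="\<lambda>x. f x - c" and m=m] r smb fx0 m by auto
    obtain z where "z \<noteq> x0" "\<bar>z - x0\<bar> < s" "f z = c" using acc s by blast
    with s(2)[of z] show False by (auto simp: dist_real_def abs_minus_commute)
  qed
  show ?thesis
  proof (intro exI conjI allI impI)
    show "r > 0" by (rule r)
    fix y assume y: "\<bar>y - x0\<bar> < r"
    have "(\<lambda>n. a n * (y - x0) ^ n) = (\<lambda>n. if n = 0 then a 0 else 0)"
      using az by (auto intro!: ext)
    hence "(\<lambda>n. if n = 0 then a 0 else 0) sums f y" using sm[OF y] by simp
    moreover have "(\<lambda>n. if n = 0 then a 0 else 0) sums a 0" using sums_single[of 0 "\<lambda>_. a 0"] by simp
    ultimately have "f y = a 0" using sums_unique2 by blast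
    moreover have "f x0 = a 0" using sm[of x0] r by (simp add: sums_iff)
    ultimately show "f y = c" using fx0 by simp
  qed
qed

lemma analytic_const_global:
  assumes an: "real_analytic_on f I" and "open I" and conn: "connected I" and x0: "x0 \<in> I"
    and loc: "\<exists>e>0. \<forall>y. \<bar>y - x0\<bar> < e \<longrightarrow> f y = c"
  shows "\<forall>x\<in>I. f x = c"
proof -
  define S where "S = {x. \<exists>e>0. \<forall>y. \<bar>y - x\<bar> < e \<longrightarrow> f y = c}"
  define T where "T = {x. \<exists>e>0. \<forall>y. \<bar>y - x\<bar> < e \<longrightarrow> y \<notin> S}"
  have oS: "open S" unfolding open_dist
  proof (intro ballI)
    fix x assume "x \<in> S"
    then obtain e where e: "e > 0" "\<And>y. \<bar>y - x\<bar> < e \<Longrightarrow> f y = c" unfolding S_def by blast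
    show "\<exists>e>0. \<forall>y. dist y x < e \<longrightarrow> y \<in> S"
    proof (intro exI conjI allI impI)
      show "e > 0" by (rule e)
      fix y assume y: "dist y x < e"
      show "y \<in> S" unfolding S_def
        by (rule CollectI, rule exI[of _ "e - \<bar>y - x\<bar>"]) (use y e in \<open>auto simp: dist_real_def\<close>)
    qed
  qed
  have oT: "open T" unfolding open_dist
  proof (intro ballI)
    fix x assume "x \<in> T"
    then obtain e where e: "e > 0" "\<And>y. \<bar>y - x\<bar> < e \<Longrightarrow> y \<notin> S" unfolding T_def by blast
    show "\<exists>e>0. \<forall>y. dist y x < e \<longrightarrow> y \<in> T"
    proof (intro exI conjI allI impI)
      show "e > 0" by (rule e)
      fix y assume y: "dist y x < e"
      show "y \<in> T" unfolding T_def
        by (rule CollectI, rule exI[of _ "e - \<bar>y - x\<bar>"]) (use y e in \<open>auto simp: dist_real_def\<close>)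
    qed
  qed
  have disj: "S \<inter> T \<inter> I = {}"
  proof -
    have "x \<notin> T" if "x \<in> S" for x
    proof
      assume "x \<in> T"
      then obtain e where "e > 0" "\<And>y. \<bar>y - x\<bar> < e \<Longrightarrow> y \<notin> S" unfolding T_def by blast
      with that show False by force
    qed
    thus ?thesis by blast
  qed
  have cov: "I \<subseteq> S \<union> T"
  proof
    fix x assume xI: "x \<in> I"
    show "x \<in> S \<union> T"
    proof (rule ccontr)
      assume nx: "x \<notin> S \<union> T"
      have "\<forall>e>0. \<exists>z. z \<noteq> x \<and> \<bar>z - x\<bar> < e \<and> f z = c"
      proof (intro allI impI)
        fix e :: real assume "e > 0"
        then obtain y where y: "\<bar>y - x\<bar> < e" "y \<in> S" using nx unfolding T_def by blast
        have "y \<noteq> x" using y nx by auto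
        moreover have "f y = c" using y(2) unfolding S_def by force
        ultimately show "\<exists>z. z \<noteq> x \<and> \<bar>z - x\<bar> < e \<and> f z = c" using y by blast
      qed
      from analytic_loc_const[OF an xI this] have "x \<in> S" unfolding S_def by blast
      with nx show False by blast
    qed
  qed
  have "S \<inter> I = {} \<or> T \<inter> I = {}" using connectedD[OF conn oS oT disj cov] .
  moreover have "x0 \<in> S" using loc unfolding S_def by blast
  ultimately have "T \<inter> I = {}" using x0 by blast
  hence "I \<subseteq> S" using cov by blast
  thus ?thesis unfolding S_def by force
qed



lemma two_powr_small: "(e::real) > 0 \<Longrightarrow> \<exists>M::nat. \<forall>m\<ge>M. 2 powr (- real m) < e"
proof -
  assume e: "e > 0"
  obtain n where n: "(1/2::real) ^ n < e" using real_arch_pow_inv[OF e, of "1/2"] by auto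
  show ?thesis
  proof (intro exI allI impI)
    fix m assume "n \<le> m"
    have "2 powr (- real m) = (1/2::real) ^ m"
      by (simp add: powr_minus powr_realpow power_one_over inverse_eq_divide)
    also have "\<dots> \<le> (1/2) ^ n" using \<open>n \<le> m\<close> by (intro power_decreasing) auto
    finally show "2 powr (- real m) < e" using n by simp
  qed
qed

lemma two_powr_large: "\<exists>M::nat. \<forall>m\<ge>M. (B::real) < 2 powr (real m / 2)"
proof -
  obtain n where n: "B < sqrt 2 ^ n" using real_arch_pow[of "sqrt 2" B] by auto
  show ?thesis
  proof (intro exI allI impI)
    fix m assume "n \<le> m"
    have "sqrt 2 ^ m = (2 powr (1/2)) ^ m" by (simp add: powr_half_sqrt)
    also have "\<dots> = (2 powr (1/2)) powr (real m)" by (simp add: powr_realpow)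
    also have "\<dots> = 2 powr (real m / 2)" by (simp add: powr_powr)
    finally have "2 powr (real m / 2) = sqrt 2 ^ m" ..
    moreover have "sqrt 2 ^ n \<le> sqrt 2 ^ m" using \<open>n \<le> m\<close> by (intro power_increasing) auto
    ultimately show "B < 2 powr (real m / 2)" using n by linarith
  qed
qed

lemma psi_small:
  assumes "\<psi> \<in> o[at_top](\<lambda>m. m)" "(c::real) > 0"
  shows "\<exists>M::nat. \<forall>m\<ge>M. \<psi> (real m) \<le> c * real m"
proof -
  have "eventually (\<lambda>x. norm (\<psi> x) \<le> c * norm x) at_top"
    using landau_o.smallD[OF assms] by simp
  then obtain N where N: "\<And>x. x \<ge> N \<Longrightarrow> norm (\<psi> x) \<le> c * norm x"
    by (auto simp: eventually_at_top_linorder)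
  show ?thesis
  proof (intro exI allI impI)
    fix m :: nat assume "nat \<lceil>N\<rceil> \<le> m"
    hence "real m \<ge> N" by linarith
    from N[OF this] show "\<psi> (real m) \<le> c * real m" by simp
  qed
qed



theorem theorem2p1:
  fixes f :: "real \<Rightarrow> real" and I :: "real set" and \<psi> :: "real \<Rightarrow> real"
  assumes I_open: "open I" and I_interval: "is_interval I" and I_ne: "I \<noteq> {}"
    and analytic: "real_analytic_on f I"
    and nonconst: "\<not> (\<exists>c. \<forall>x\<in>I. f x = c)"
    and rat_to_rat: "f ` (\<rat> \<inter> I) \<subseteq> \<rat>"
    and psi_pos: "\<forall>m>0. \<psi> m > 0"
    and psi_o: "\<psi> \<in> o[at_top](\<lambda>m. m)"
    and approx: "\<forall>\<zeta> \<in> Liouville \<inter> I. \<forall>m::nat. m \<ge> 1 \<longrightarrow>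
       (\<exists>p q :: int. p \<ge> 2 \<and> q \<ge> 2 \<and> coprime p q
          \<and> real_of_int p / real_of_int q \<in> I
          \<and> \<bar>\<zeta> - real_of_int p / real_of_int q\<bar> \<le> real_of_int q powr (- real m)
          \<and> (\<exists>p' q' :: int. q' > 0 \<and> coprime p' q'
               \<and> f (real_of_int p / real_of_int q) = real_of_int p' / real_of_int q'
               \<and> real_of_int q' \<le> real_of_int q powr \<psi> (real m)))"
  shows "f ` (Liouville \<inter> I) \<subseteq> Liouville"
proof
  fix w assume "w \<in> f ` (Liouville \<inter> I)"
  then obtain \<zeta> where zL: "\<zeta> \<in> Liouville" and zI: "\<zeta> \<in> I" and w: "w = f \<zeta>" by blast
  have zirr: "\<zeta> \<notin> \<rat>" using zL unfolding Liouville_def by blast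
  have conn: "connected I" using I_interval by (rule is_interval_connected)
  obtain d C where d: "d > 0" "C > 0"
    and L: "\<And>y. \<bar>y - \<zeta>\<bar> < d \<Longrightarrow> \<bar>f y - f \<zeta>\<bar> \<le> C * \<bar>y - \<zeta>\<bar>"
    using analytic_lip[OF analytic zI] by blast
  have key: "\<exists>p q p' q' :: int. q \<ge> 2 \<and> q' > 0 \<and> real_of_int p / real_of_int q \<noteq> \<zeta>
      \<and> \<bar>f (real_of_int p / real_of_int q) - f \<zeta>\<bar> \<le> C * real_of_int q powr (- real m)
      \<and> real_of_int q powr (- real m) \<le> 2 powr (- real m)
      \<and> \<bar>real_of_int p / real_of_int q - \<zeta>\<bar> \<le> 2 powr (- real m)
      \<and> f (real_of_int p / real_of_int q) = real_of_int p' / real_of_int q'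
      \<and> real_of_int q' \<le> real_of_int q powr \<psi> (real m)"
    if m1: "m \<ge> 1" and md: "2 powr (- real m) < d" for m :: nat
  proof -
    have H: "\<exists>p q :: int. p \<ge> 2 \<and> q \<ge> 2 \<and> coprime p q
          \<and> real_of_int p / real_of_int q \<in> I
          \<and> \<bar>\<zeta> - real_of_int p / real_of_int q\<bar> \<le> real_of_int q powr (- real m)
          \<and> (\<exists>p' q' :: int. q' > 0 \<and> coprime p' q'
               \<and> f (real_of_int p / real_of_int q) = real_of_int p' / real_of_int q'
               \<and> real_of_int q' \<le> real_of_int q powr \<psi> (real m))"
      using approx[rule_format, OF IntI[OF zL zI] m1] .
    then obtain p q :: int where q2: "q \<ge> 2" and cl0: "\<bar>\<zeta> - real_of_int p / real_of_int q\<bar> \<le> real_of_int q powr (- real m)"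
      and ex: "\<exists>p' q' :: int. q' > 0 \<and> coprime p' q'
               \<and> f (real_of_int p / real_of_int q) = real_of_int p' / real_of_int q'
               \<and> real_of_int q' \<le> real_of_int q powr \<psi> (real m)"
      by blast
    from ex obtain p' q' :: int where pq'1: "q' > 0" and pq'2: "f (real_of_int p / real_of_int q) = real_of_int p' / real_of_int q'"
      and pq'3: "real_of_int q' \<le> real_of_int q powr \<psi> (real m)" by (elim exE conjE) (rule that; assumption)
    have cl: "\<bar>real_of_int p / real_of_int q - \<zeta>\<bar> \<le> real_of_int q powr (- real m)"
      using cl0 by (subst abs_minus_commute)
    have "real_of_int p / real_of_int q \<in> \<rat>" by simp
    hence neq: "real_of_int p / real_of_int q \<noteq> \<zeta>" using zirr by auto
    have q2m: "real_of_int q powr (- real m) \<le> 2 powr (- real m)"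
      by (rule powr_mono2') (use q2 in auto)
    have cl2: "\<bar>real_of_int p / real_of_int q - \<zeta>\<bar> \<le> 2 powr (- real m)"
      using cl q2m by linarith
    have "\<bar>real_of_int p / real_of_int q - \<zeta>\<bar> < d" using cl2 md by linarith
    from L[OF this] have L1: "\<bar>f (real_of_int p / real_of_int q) - f \<zeta>\<bar> \<le> C * \<bar>real_of_int p / real_of_int q - \<zeta>\<bar>" .
    have "C * \<bar>real_of_int p / real_of_int q - \<zeta>\<bar> \<le> C * real_of_int q powr (- real m)"
      using cl d by (intro mult_left_mono) auto
    with L1 have fz: "\<bar>f (real_of_int p / real_of_int q) - f \<zeta>\<bar> \<le> C * real_of_int q powr (- real m)"
      by (rule order_trans)
    show ?thesis
      by (rule exI[of _ p], rule exI[of _ q], rule exI[of _ p'], rule exI[of _ q'])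
         (intro conjI q2 pq'1 neq fz q2m cl2 pq'2 pq'3)
  qed
  have firr: "f \<zeta> \<notin> \<rat>"
  proof
    assume "f \<zeta> \<in> \<rat>"
    then obtain u v :: int where v: "v > 0" and uv: "f \<zeta> = real_of_int u / real_of_int v"
      using Rats_cases'[OF \<open>f \<zeta> \<in> \<rat>\<close>] by metis
    have acc: "\<forall>e>0. \<exists>z. z \<noteq> \<zeta> \<and> \<bar>z - \<zeta>\<bar> < e \<and> f z = f \<zeta>"
    proof (intro allI impI)
      fix e :: real assume e: "e > 0"
      obtain M1 where M1: "\<forall>m\<ge>M1. 2 powr (- real m) < min e d"
        using two_powr_small[of "min e d"] e d by auto
      obtain M2 where M2: "\<forall>m\<ge>M2. \<psi> (real m) \<le> 1/2 * real m"
        using psi_small[OF psi_o, of "1/2"] by auto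
      obtain M3 where M3: "\<forall>m\<ge>M3. C * v < 2 powr (real m / 2)" using two_powr_large by blast
      define m where "m = max 1 (max M1 (max M2 M3))"
      have m1: "m \<ge> 1" and mM1: "2 powr (- real m) < min e d" and mM2: "\<psi> (real m) \<le> 1/2 * real m"
        and mM3: "C * v < 2 powr (real m / 2)"
        using M1 M2 M3 by (auto simp: m_def)
      have md: "2 powr (- real m) < d" using mM1 by simp
      obtain p q p' q' :: int where q2: "q \<ge> 2" and q': "q' > 0"
        and neq: "real_of_int p / real_of_int q \<noteq> \<zeta>"
        and clo: "\<bar>real_of_int p / real_of_int q - \<zeta>\<bar> \<le> 2 powr (- real m)"
        and fz: "\<bar>f (real_of_int p / real_of_int q) - f \<zeta>\<bar> \<le> C * real_of_int q powr (- real m)"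
        and q2m: "real_of_int q powr (- real m) \<le> 2 powr (- real m)"
        and fpq: "f (real_of_int p / real_of_int q) = real_of_int p' / real_of_int q'"
        and q'le: "real_of_int q' \<le> real_of_int q powr \<psi> (real m)"
        using key[OF m1 md] by (elim exE conjE) (rule that; assumption)
      have "f (real_of_int p / real_of_int q) = f \<zeta>"
      proof (rule ccontr)
        assume ne: "f (real_of_int p / real_of_int q) \<noteq> f \<zeta>"
        have "p' * v \<noteq> u * q'"
        proof
          assume "p' * v = u * q'"
          hence "real_of_int p' * real_of_int v = real_of_int u * real_of_int q'" by (metis of_int_mult)
          hence "real_of_int p' / real_of_int q' = real_of_int u / real_of_int v"
            using v q' by (simp add: field_simps)
          with ne fpq uv show False by simp
        qed
        hence "p' * v - u * q' \<noteq> 0" by simp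
        hence "1 \<le> \<bar>p' * v - u * q'\<bar>" by linarith
        hence one: "1 \<le> \<bar>real_of_int (p' * v - u * q')\<bar>"
          by (metis of_int_1_le_iff of_int_abs)
        define Q where "Q = real_of_int q powr (real m / 2)"
        have Q2: "2 powr (real m / 2) \<le> Q" unfolding Q_def by (rule powr_mono2) (use q2 in auto)
        have Cv: "C * v > 0" using d v by simp
        have Qpos: "Q > 0" using Q2 mM3 Cv by linarith
        have hQ: "real_of_int q powr (- real m) = 1 / (Q * Q)"
          unfolding Q_def using q2
          by (simp add: powr_minus powr_add[symmetric] inverse_eq_divide)
        have "real_of_int q powr \<psi> (real m) \<le> Q"
          unfolding Q_def by (rule powr_mono) (use q2 mM2 in auto)
        hence q'Q: "real_of_int q' \<le> Q" using q'le by linarith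
        define a where "a = real_of_int p' / real_of_int q' - real_of_int u / real_of_int v"
        define w0 where "w0 = real_of_int q' * real_of_int v"
        have w0: "w0 > 0" using v q' by (simp add: w0_def)
        have e1: "a * w0 = real_of_int (p' * v - u * q')"
          unfolding a_def w0_def using v q' by (simp add: field_simps)
        have aeq: "\<bar>f (real_of_int p / real_of_int q) - f \<zeta>\<bar> = \<bar>a\<bar>"
          by (simp add: fpq uv a_def)
        have aw: "\<bar>a\<bar> * w0 = \<bar>real_of_int (p' * v - u * q')\<bar>"
          using w0 by (subst e1[symmetric]) (simp add: abs_mult)
        have "1 \<le> \<bar>a\<bar> * w0"
          using one unfolding aw .
        also have "\<dots> \<le> (C / (Q * Q)) * w0"
          using fz aeq hQ w0 by (intro mult_right_mono) auto
        finally have s2: "1 \<le> (C / (Q * Q)) * w0" .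
        have "Q * Q = 1 * (Q * Q)" by simp
        also have "\<dots> \<le> (C / (Q * Q)) * w0 * (Q * Q)"
          using s2 Qpos by (intro mult_right_mono) auto
        also have "\<dots> = C * v * q'" using Qpos by (simp add: w0_def)
        finally have "Q * Q \<le> C * v * q'" .
        also have "\<dots> \<le> C * v * Q" using q'Q Cv by (intro mult_left_mono) auto
        finally have "Q * Q \<le> (C * v) * Q" .
        hence "Q \<le> C * v" using Qpos by simp
        thus False using Q2 mM3 by linarith
      qed
      moreover have "\<bar>real_of_int p / real_of_int q - \<zeta>\<bar> < e"
      proof -
        have "2 powr (- real m) < e" using mM1 by simp
        thus ?thesis using clo by linarith
      qed
      ultimately show "\<exists>z. z \<noteq> \<zeta> \<and> \<bar>z - \<zeta>\<bar> < e \<and> f z = f \<zeta>" using neq by blast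
    qed
    have "\<forall>x\<in>I. f x = f \<zeta>"
      using analytic_const_global[OF analytic I_open conn zI analytic_loc_const[OF analytic zI acc]] .
    with nonconst show False by blast
  qed
  show "w \<in> Liouville" unfolding w Liouville_def
  proof (intro CollectI conjI allI impI)
    show "f \<zeta> \<notin> \<rat>" by (rule firr)
    fix \<eta> :: real assume eta: "\<eta> > 0"
    let ?A = "{(y::int, x::int). x \<ge> 1 \<and> \<bar>f \<zeta> - real_of_int y / real_of_int x\<bar> \<le> real_of_int x powr (-\<eta>)}"
    show "infinite ?A"
    proof
      assume fin: "finite ?A"
      define D where "D = (\<lambda>(y, x). \<bar>f \<zeta> - real_of_int y / real_of_int x\<bar>) ` ?A"
      define dd where "dd = Min (insert 1 D)"
      have finD: "finite (insert 1 D)" using fin by (simp add: D_def)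
      have Dpos: "t > 0" if "t \<in> D" for t
      proof -
        from that obtain z where "t = (\<lambda>(y, x). \<bar>f \<zeta> - real_of_int y / real_of_int x\<bar>) z"
          unfolding D_def by blast
        moreover obtain y x :: int where "z = (y, x)" by (cases z)
        ultimately have t: "t = \<bar>f \<zeta> - real_of_int y / real_of_int x\<bar>" by simp
        have "real_of_int y / real_of_int x \<in> \<rat>" by simp
        hence "f \<zeta> \<noteq> real_of_int y / real_of_int x" using firr by auto
        thus ?thesis using t by simp
      qed
      have dd: "dd > 0" unfolding dd_def using Dpos by (subst Min_gr_iff[OF finD]) auto
      obtain M1 where M1: "\<forall>m\<ge>M1. 2 powr (- real m) < min d (dd / C)"
        using two_powr_small[of "min d (dd / C)"] dd d by auto
      obtain M2 where M2: "\<forall>m\<ge>M2. \<psi> (real m) \<le> 1 / (2 * \<eta>) * real m"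
        using psi_small[OF psi_o, of "1 / (2 * \<eta>)"] eta by auto
      obtain M3 where M3: "\<forall>m\<ge>M3. C < 2 powr (real m / 2)" using two_powr_large by blast
      define m where "m = max 1 (max M1 (max M2 M3))"
      have m1: "m \<ge> 1" and mM1: "2 powr (- real m) < min d (dd / C)"
        and mM2: "\<psi> (real m) \<le> 1 / (2 * \<eta>) * real m"
        and mM3: "C < 2 powr (real m / 2)"
        using M1 M2 M3 by (auto simp: m_def)
      have md: "2 powr (- real m) < d" using mM1 by simp
      obtain p q p' q' :: int where q2: "q \<ge> 2" and q': "q' > 0"
        and fz: "\<bar>f (real_of_int p / real_of_int q) - f \<zeta>\<bar> \<le> C * real_of_int q powr (- real m)"
        and q2m: "real_of_int q powr (- real m) \<le> 2 powr (- real m)"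
        and fpq: "f (real_of_int p / real_of_int q) = real_of_int p' / real_of_int q'"
        and q'le: "real_of_int q' \<le> real_of_int q powr \<psi> (real m)"
        using key[OF m1 md] by (elim exE conjE) (rule that; assumption)
      define Q where "Q = real_of_int q powr (real m / 2)"
      have Q2: "2 powr (real m / 2) \<le> Q" unfolding Q_def by (rule powr_mono2) (use q2 in auto)
      have Qpos: "Q > 0" using q2 by (simp add: Q_def)
      have hQ: "real_of_int q powr (- real m) = 1 / (Q * Q)"
        unfolding Q_def using q2
        by (simp add: powr_minus powr_add[symmetric] inverse_eq_divide)
      have dist: "\<bar>f \<zeta> - real_of_int p' / real_of_int q'\<bar> \<le> C * real_of_int q powr (- real m)"
        using fz unfolding fpq by (subst abs_minus_commute)
      have "C * real_of_int q powr (- real m) = (C / Q) * (1 / Q)" using hQ by simp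
      also have "\<dots> \<le> 1 * (1 / Q)"
      proof (rule mult_right_mono)
        show "C / Q \<le> 1" using Q2 mM3 Qpos by simp
      qed (use Qpos in simp)
      also have "\<dots> = 1 / Q" by simp
      also have "1 / Q = real_of_int q powr (- (real m / 2))"
        by (simp add: Q_def powr_minus inverse_eq_divide)
      also have "\<dots> \<le> real_of_int q powr (\<psi> (real m) * - \<eta>)"
      proof (rule powr_mono)
        have "\<eta> * \<psi> (real m) \<le> \<eta> * (1 / (2 * \<eta>) * real m)" using mM2 eta by (intro mult_left_mono) auto
        also have "\<dots> = real m / 2" using eta by simp
        finally show "- (real m / 2) \<le> \<psi> (real m) * - \<eta>" by (simp add: algebra_simps)
      qed (use q2 in auto)
      also have "\<dots> = (real_of_int q powr \<psi> (real m)) powr (- \<eta>)" by (simp add: powr_powr)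
      also have "\<dots> \<le> real_of_int q' powr (- \<eta>)"
        by (rule powr_mono2') (use eta q' q'le in auto)
      finally have F: "C * real_of_int q powr (- real m) \<le> real_of_int q' powr (- \<eta>)" .
      have "(p', q') \<in> ?A" using order_trans[OF dist F] q' by simp
      hence "(\<lambda>(y, x). \<bar>f \<zeta> - real_of_int y / real_of_int x\<bar>) (p', q') \<in> D"
        unfolding D_def by (rule imageI)
      hence "\<bar>f \<zeta> - real_of_int p' / real_of_int q'\<bar> \<in> insert 1 D" by simp
      hence "dd \<le> \<bar>f \<zeta> - real_of_int p' / real_of_int q'\<bar>" unfolding dd_def by (rule Min_le[OF finD])
      moreover have "C * real_of_int q powr (- real m) < dd"
      proof -
        have "C * real_of_int q powr (- real m) \<le> C * 2 powr (- real m)" using q2m d by simp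
        also have "\<dots> < C * (dd / C)" using mM1 d by (intro mult_strict_left_mono) auto
        finally show ?thesis using d by simp
      qed
      ultimately show False using dist by linarith
    qed
  qed
qed

end
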